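(* Let $\gamma>0$. Then on $\mathcal{D}(X)$, $$\left(\mathfrak{B}^\gamma_{RBF}\right)^{-1}\left(\frac{\gamma^2}{2\sqrt2}\frac{d}{dz}+\sqrt2 M_z\right)\mathfrak{B}^\gamma_{RBF}=X.$$
   Context: $X$ is the position operator $X\varphi(x)=x\varphi(x)$ on $L^2(\mathbb{R})$ with domain $\mathcal{D}(X)=\{\varphi\in L^2(\mathbb{R}):X\varphi\in L^2(\mathbb{R})\}$; $M_z$ is multiplication by $z$. $\mathfrak{B}^\gamma_{RBF}:L^2(\mathbb{R})\to\mathcal{H}_\gamma$ is the (unitary) RBF Segal–Bargmann transform $\mathfrak{B}^\gamma_{RBF}[\varphi](z)=\int_{\mathbb{R}}\mathcal{A}^\gamma_{RBF}(z,x)\varphi(x)dx$, $\mathcal{A}^\gamma_{RBF}(z,x)=\sum_{n\ge0}e_n^\gamma(z)\psi_n^{2/\gamma^2}(x)$, with $e_n^\gamma(z)=\sqrt{\frac{2^n}{\gamma^{2n}n!}}z^n\exp(-z^2/\gamma^2)$ and $\psi_n^\alpha(x)=\left(\frac{\alpha}{\pi}\right)^{1/4}(2^nn!)^{-1/2}H_n(\sqrt\alpha x)e^{-\alpha x^2/2}$. $\mathcal{H}_\gamma$ is the Hilbert space of entire $f$ with $\frac{2}{\pi\gamma^2}\int_{\mathbb{C}}|f(z)|^2\exp\left(\frac{(z-\overline z)^2}{\gamma^2}\right)dA(z)<\infty$. *)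

theory Defs
  imports "HOL-Analysis.Analysis"
begin

fun hermite :: "nat \<Rightarrow> real \<Rightarrow> real" where
  "hermite 0 x = 1"
| "hermite (Suc 0) x = 2 * x"
| "hermite (Suc (Suc n)) x = 2 * x * hermite (Suc n) x - 2 * real (Suc n) * hermite n x"

definition hermite_fun :: "real \<Rightarrow> nat \<Rightarrow> real \<Rightarrow> real" where
  "hermite_fun \<alpha> n x = (\<alpha> / pi) powr (1/4) * (2 ^ n * fact n) powr (-1/2)
      * hermite n (sqrt \<alpha> * x) * exp (- \<alpha> * x\<^sup>2 / 2)"

definition rbf_e :: "real \<Rightarrow> nat \<Rightarrow> complex \<Rightarrow> complex" where
  "rbf_e \<gamma> n z = complex_of_real (sqrt (2 ^ n / (\<gamma> ^ (2 * n) * fact n)))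
      * z ^ n * exp (- z\<^sup>2 / complex_of_real (\<gamma>\<^sup>2))"

definition rbf_kernel :: "real \<Rightarrow> complex \<Rightarrow> real \<Rightarrow> complex" where
  "rbf_kernel \<gamma> z x = (\<Sum>n. rbf_e \<gamma> n z * complex_of_real (hermite_fun (2 / \<gamma>\<^sup>2) n x))"

definition rbf_SB :: "real \<Rightarrow> (real \<Rightarrow> complex) \<Rightarrow> complex \<Rightarrow> complex" where
  "rbf_SB \<gamma> \<phi> z = integral\<^sup>L lborel (\<lambda>x. rbf_kernel \<gamma> z x * \<phi> x)"

definition L2 :: "(real \<Rightarrow> complex) set" where
  "L2 = {\<phi>. \<phi> \<in> borel_measurable lborel \<and> integrable lborel (\<lambda>x. (cmod (\<phi> x))\<^sup>2)}"

definition pos_op :: "(real \<Rightarrow> complex) \<Rightarrow> real \<Rightarrow> complex" where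
  "pos_op \<phi> x = complex_of_real x * \<phi> x"

definition dom_X :: "(real \<Rightarrow> complex) set" where
  "dom_X = {\<phi>. \<phi> \<in> L2 \<and> pos_op \<phi> \<in> L2}"

end

theory Submission
  imports Defs "HOL-Complex_Analysis.Complex_Analysis" "HOL-Probability.Distributions"
begin


fun hc :: "nat \<Rightarrow> complex \<Rightarrow> complex" where
  "hc 0 x = 1"
| "hc (Suc 0) x = 2 * x"
| "hc (Suc (Suc n)) x = 2 * x * hc (Suc n) x - 2 * of_nat (Suc n) * hc n x"

lemma hc_real: "hc n (complex_of_real r) = complex_of_real (hermite n r)"
  by (induction n r rule: hermite.induct) auto

lemma hc_rec: "hc (Suc n) u = 2 * u * hc n u - 2 * of_nat n * hc (n - 1) u"
  by (cases n) auto

lemma hc_deriv: "(hc n has_field_derivative (2 * of_nat n * hc (n - 1) u)) (at u)"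
proof (induction n u rule: hc.induct)
  case (1 x)
  then show ?case by (auto intro!: derivative_eq_intros)
next
  case (2 x)
  then show ?case by (auto intro!: derivative_eq_intros)
next
  case (3 n x)
  have D: "((\<lambda>u. 2 * u * hc (Suc n) u - 2 * of_nat (Suc n) * hc n u) has_field_derivative
     (2 * hc (Suc n) x + 2 * x * (2 * of_nat (Suc n) * hc n x) - 2 * of_nat (Suc n) * (2 * of_nat n * hc (n - 1) x))) (at x)"
    by (auto intro!: derivative_eq_intros 3)
  have e: "hc (Suc n) x = 2 * x * hc n x - 2 * of_nat n * hc (n - 1) x" by (rule hc_rec)
  have eq: "2 * hc (Suc n) x + 2 * x * (2 * of_nat (Suc n) * hc n x) - 2 * of_nat (Suc n) * (2 * of_nat n * hc (n - 1) x)
     = 2 * of_nat (Suc (Suc n)) * hc (Suc (Suc n) - 1) x"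
    by (simp add: e algebra_simps)
  have F: "hc (Suc (Suc n)) = (\<lambda>u. 2 * u * hc (Suc n) u - 2 * of_nat (Suc n) * hc n u)" by (rule ext) simp
  show ?case unfolding F eq[symmetric] by (rule D)
qed

lemma deriv_funpow_gen:
  fixes y :: complex
  shows "(deriv ^^ n) (\<lambda>t. exp (2 * y * t - t\<^sup>2)) = (\<lambda>t. hc n (y - t) * exp (2 * y * t - t\<^sup>2))"
proof (induction n)
  case 0
  then show ?case by simp
next
  case (Suc n)
  have "((\<lambda>t. hc n (y - t) * exp (2 * y * t - t\<^sup>2)) has_field_derivative
     hc (Suc n) (y - t) * exp (2 * y * t - t\<^sup>2)) (at t)" for t
  proof -
    have d: "((\<lambda>t. hc n (y - t)) has_field_derivative (2 * of_nat n * hc (n - 1) (y - t)) * (-1)) (at t)"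
      by (rule DERIV_chain2[where f="hc n" and g="\<lambda>t. y - t", OF hc_deriv]) (auto intro!: derivative_eq_intros)
    have "((\<lambda>t. hc n (y - t) * exp (2 * y * t - t\<^sup>2)) has_field_derivative
      (2 * of_nat n * hc (n - 1) (y - t)) * (-1) * exp (2 * y * t - t\<^sup>2) + hc n (y - t) * (exp (2 * y * t - t\<^sup>2) * (2 * y - 2 * t))) (at t)"
      by (auto intro!: derivative_eq_intros d simp: power2_eq_square)
    moreover have "(2 * of_nat n * hc (n - 1) (y - t)) * (-1) * exp (2 * y * t - t\<^sup>2) + hc n (y - t) * (exp (2 * y * t - t\<^sup>2) * (2 * y - 2 * t))
       = hc (Suc n) (y - t) * exp (2 * y * t - t\<^sup>2)"
      by (simp add: hc_rec[of n "y - t"] algebra_simps)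
    ultimately show ?thesis by simp
  qed
  then show ?case using Suc by (auto intro!: ext DERIV_imp_deriv)
qed

lemma hermite_gen:
  fixes y t :: complex
  shows "(\<lambda>n. hc n y / fact n * t ^ n) sums exp (2 * y * t - t\<^sup>2)"
proof -
  have "(\<lambda>t. exp (2 * y * t - t\<^sup>2)) holomorphic_on ball 0 (norm t + 1)"
    by (auto intro!: holomorphic_intros)
  from holomorphic_power_series[OF this, of t]
  show ?thesis by (simp add: deriv_funpow_gen)
qed

lemma alg1:
  fixes G X z c :: complex
  assumes "G \<noteq> 0" "c * c = 2"
  shows "- X\<^sup>2 / G\<^sup>2 + (- z\<^sup>2 / G\<^sup>2) + (2 * (c / G * X) * (z / G) - (z / G)\<^sup>2) = - (c * z - X)\<^sup>2 / G\<^sup>2"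
proof -
  have "- X\<^sup>2 / G\<^sup>2 + (- z\<^sup>2 / G\<^sup>2) + (2 * (c / G * X) * (z / G) - (z / G)\<^sup>2) = (- X\<^sup>2 - 2 * z\<^sup>2 + 2 * c * X * z) / G\<^sup>2"
    using assms(1) by (simp add: power_divide add_divide_distrib diff_divide_distrib power2_eq_square)
  also have "- X\<^sup>2 - 2 * z\<^sup>2 + 2 * c * X * z = - (c * z - X)\<^sup>2"
    using assms(2) by (simp add: power2_eq_square algebra_simps)
  finally show ?thesis by simp
qed

definition kern :: "real \<Rightarrow> complex \<Rightarrow> real \<Rightarrow> complex" where
  "kern \<gamma> z x = complex_of_real ((2 / \<gamma>\<^sup>2 / pi) powr (1/4))
      * exp (- (complex_of_real (sqrt 2) * z - complex_of_real x)\<^sup>2 / complex_of_real (\<gamma>\<^sup>2))"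

lemma coef_eq:
  assumes "\<gamma> > 0"
  shows "sqrt (2 ^ n / (\<gamma> ^ (2 * n) * fact n)) * (2 ^ n * fact n) powr (-1/2) = 1 / (\<gamma> ^ n * fact n)"
proof -
  have p: "(0::real) < 2 ^ n * fact n" by simp
  have 1: "(2 ^ n * fact n) powr (-1/2) = 1 / sqrt (2 ^ n * fact n)"
    using p by (simp add: powr_minus_divide powr_half_sqrt[symmetric])
  have 2: "sqrt (\<gamma> ^ (2 * n)) = \<gamma> ^ n"
    using assms by (simp add: power_mult real_sqrt_power)
  have 3: "sqrt (fact n) * sqrt (fact n) = (fact n :: real)" by simp
  have 5: "sqrt (2 ^ n / (\<gamma> ^ (2 * n) * fact n)) = sqrt (2^n) / (\<gamma> ^ n * sqrt (fact n))"
    by (simp only: real_sqrt_divide real_sqrt_mult 2)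
  have 6: "A / (G * B) * (1 / (A * B)) = 1 / (G * (B * B))" if "A > 0" "B > 0" "G > 0" for A B G :: real
    using that by (simp add: field_simps)
  have "sqrt (2^n) / (\<gamma> ^ n * sqrt (fact n)) * (1 / (sqrt (2^n) * sqrt (fact n))) = 1 / (\<gamma> ^ n * (sqrt (fact n) * sqrt (fact n)))"
    by (rule 6) (use assms in auto)
  then show ?thesis unfolding 1 5 real_sqrt_mult 3 .
qed

lemma exp_alg:
  fixes \<gamma> x :: real and z :: complex
  assumes "\<gamma> > 0"
  shows "complex_of_real (- (2 / \<gamma>\<^sup>2) * x\<^sup>2 / 2) + (- z\<^sup>2 / complex_of_real (\<gamma>\<^sup>2)) +
          (2 * complex_of_real (sqrt (2 / \<gamma>\<^sup>2) * x) * (z / complex_of_real \<gamma>) - (z / complex_of_real \<gamma>)\<^sup>2)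
       = - (complex_of_real (sqrt 2) * z - complex_of_real x)\<^sup>2 / complex_of_real (\<gamma>\<^sup>2)"
proof -
  define c where "c = complex_of_real (sqrt 2)"
  have g: "complex_of_real \<gamma> \<noteq> 0" using assms by simp
  have sa: "complex_of_real (sqrt (2 / \<gamma>\<^sup>2)) = c / complex_of_real \<gamma>"
    using assms by (simp add: c_def real_sqrt_divide)
  have s2: "c * c = 2" unfolding c_def
    by (simp only: of_real_mult[symmetric] real_sqrt_mult_self) simp
  have e: "complex_of_real (- (2 / \<gamma>\<^sup>2) * x\<^sup>2 / 2) = - (complex_of_real x)\<^sup>2 / (complex_of_real \<gamma>)\<^sup>2"
    using g by (simp add: field_simps)
  show ?thesis
    unfolding e of_real_mult sa c_def[symmetric] of_real_power by (rule alg1[OF g s2])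
qed

lemma kernel_eq:
  assumes "\<gamma> > 0"
  shows "rbf_kernel \<gamma> z x = kern \<gamma> z x"
proof -
  define \<alpha> where "\<alpha> = 2 / \<gamma>\<^sup>2"
  define y where "y = sqrt \<alpha> * x"
  define t where "t = z / complex_of_real \<gamma>"
  define P where "P = (\<alpha> / pi) powr (1/4)"
  define K where "K = complex_of_real (P * exp (- \<alpha> * x\<^sup>2 / 2)) * exp (- z\<^sup>2 / complex_of_real (\<gamma>\<^sup>2))"
  have tm: "rbf_e \<gamma> n z * complex_of_real (hermite_fun \<alpha> n x) = K * (hc n (complex_of_real y) / fact n * t ^ n)" for n
  proof -
    have "rbf_e \<gamma> n z * complex_of_real (hermite_fun \<alpha> n x)
      = complex_of_real (sqrt (2 ^ n / (\<gamma> ^ (2 * n) * fact n)) * (2 ^ n * fact n) powr (-1/2))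
        * (complex_of_real (P * exp (- \<alpha> * x\<^sup>2 / 2)) * exp (- z\<^sup>2 / complex_of_real (\<gamma>\<^sup>2)))
        * complex_of_real (hermite n y) * z ^ n"
      unfolding rbf_e_def hermite_fun_def y_def P_def by (simp add: algebra_simps)
    also have "\<dots> = K * (hc n (complex_of_real y) / fact n * t ^ n)"
      unfolding coef_eq[OF assms] K_def[symmetric] t_def hc_real
      using assms by (simp add: field_simps power_divide)
    finally show ?thesis .
  qed
  have "(\<lambda>n. K * (hc n (complex_of_real y) / fact n * t ^ n)) sums (K * exp (2 * complex_of_real y * t - t\<^sup>2))"
    by (rule sums_mult[OF hermite_gen])
  hence s: "rbf_kernel \<gamma> z x = K * exp (2 * complex_of_real y * t - t\<^sup>2)"
    unfolding rbf_kernel_def \<alpha>_def[symmetric] tm by (rule sums_unique[symmetric])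
  have "K * exp (2 * complex_of_real y * t - t\<^sup>2) = complex_of_real P *
     exp (complex_of_real (- \<alpha> * x\<^sup>2 / 2) + (- z\<^sup>2 / complex_of_real (\<gamma>\<^sup>2)) + (2 * complex_of_real y * t - t\<^sup>2))"
    unfolding K_def exp_add of_real_mult exp_of_real by (simp add: mult.assoc)
  also have "\<dots> = kern \<gamma> z x"
    unfolding kern_def P_def \<alpha>_def y_def t_def exp_alg[OF assms] by simp
  finally show ?thesis using s by simp
qed


lemma gauss_shift_int:
  assumes "g > 0"
  shows "integrable lborel (\<lambda>x::real. exp (- (x - m)\<^sup>2 / g))"
proof -
  define \<sigma> where "\<sigma> = sqrt (g / 2)"
  have s: "2 * \<sigma>\<^sup>2 = g" using assms by (simp add: \<sigma>_def)
  have sp: "\<sigma> > 0" "\<sigma> \<noteq> 0" using assms by (simp_all add: \<sigma>_def)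
  have i: "integrable lborel (\<lambda>x. sqrt (2 * pi * \<sigma>\<^sup>2) * normal_density m \<sigma> x)"
    using sp by (auto intro!: integrable_mult_right integrable_normal_density)
  have "(\<lambda>x. sqrt (2 * pi * \<sigma>\<^sup>2) * normal_density m \<sigma> x) = (\<lambda>x. exp (- (x - m)\<^sup>2 / g))"
    unfolding normal_density_def s using sp by (simp add: fun_eq_iff)
  with i show ?thesis by simp
qed

lemma gauss_lin_int:
  assumes "g > 0"
  shows "integrable lborel (\<lambda>x::real. exp (R * x - x\<^sup>2 / g))"
proof -
  have i: "integrable lborel (\<lambda>x. exp (R\<^sup>2 * g / 4) * exp (- (x - R * g / 2)\<^sup>2 / g))"
    by (intro integrable_mult_right gauss_shift_int assms)
  have e: "exp (R\<^sup>2 * g / 4) * exp (- (x - R * g / 2)\<^sup>2 / g) = exp (R * x - x\<^sup>2 / g)" for x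
  proof -
    have "R\<^sup>2 * g / 4 + (- (x - R * g / 2)\<^sup>2 / g) = R * x - x\<^sup>2 / g"
      using assms by (simp add: field_simps power2_eq_square)
    then show ?thesis by (simp add: exp_add[symmetric])
  qed
  show ?thesis using i unfolding e .
qed

lemma gauss_abs_int:
  assumes "g > 0"
  shows "integrable lborel (\<lambda>x::real. exp (R * \<bar>x\<bar> - x\<^sup>2 / g))"
proof (rule Bochner_Integration.integrable_bound)
  show "integrable lborel (\<lambda>x::real. exp (R * x - x\<^sup>2 / g) + exp ((- R) * x - x\<^sup>2 / g))"
    by (intro Bochner_Integration.integrable_add gauss_lin_int assms)
  show "(\<lambda>x::real. exp (R * \<bar>x\<bar> - x\<^sup>2 / g)) \<in> borel_measurable lborel"
    by measurable
  show "AE x in lborel. norm (exp (R * \<bar>x\<bar> - x\<^sup>2 / g)) \<le> norm (exp (R * x - x\<^sup>2 / g) + exp ((- R) * x - x\<^sup>2 / g))"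
  proof (rule AE_I2)
    fix x :: real
    have "exp (R * \<bar>x\<bar> - x\<^sup>2 / g) \<le> exp (R * x - x\<^sup>2 / g) + exp ((- R) * x - x\<^sup>2 / g)"
    proof (cases "x \<ge> 0")
      case True
      then show ?thesis by (simp add: add_increasing2)
    next
      case False
      then show ?thesis by (simp add: add_increasing)
    qed
    then show "norm (exp (R * \<bar>x\<bar> - x\<^sup>2 / g)) \<le> norm (exp (R * x - x\<^sup>2 / g) + exp ((- R) * x - x\<^sup>2 / g))"
      by (simp add: add_pos_pos)
  qed
qed

lemma int_phi:
  fixes f \<phi> :: "real \<Rightarrow> complex"
  assumes g: "g > 0" and phi: "\<phi> \<in> L2" and fm: "f \<in> borel_measurable lborel"
    and bnd: "\<And>x. norm (f x) \<le> Q * exp (R * \<bar>x\<bar> - x\<^sup>2 / g)"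
  shows "integrable lborel (\<lambda>x. f x * \<phi> x)"
proof (rule Bochner_Integration.integrable_bound)
  have pm: "\<phi> \<in> borel_measurable lborel" and pi2: "integrable lborel (\<lambda>x. (cmod (\<phi> x))\<^sup>2)"
    using phi by (auto simp: L2_def)
  show "integrable lborel (\<lambda>x. (Q\<^sup>2 * exp ((2 * R) * \<bar>x\<bar> - x\<^sup>2 / (g / 2)) + (cmod (\<phi> x))\<^sup>2) / 2)"
    by (intro integrable_divide Bochner_Integration.integrable_add integrable_mult_right gauss_abs_int pi2) (use g in simp)
  show "(\<lambda>x. f x * \<phi> x) \<in> borel_measurable lborel"
    using fm pm by measurable
  show "AE x in lborel. norm (f x * \<phi> x) \<le> norm ((Q\<^sup>2 * exp ((2 * R) * \<bar>x\<bar> - x\<^sup>2 / (g / 2)) + (cmod (\<phi> x))\<^sup>2) / 2)"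
  proof (rule AE_I2)
    fix x
    have n0: "0 \<le> norm (f x)" by simp
    have "(norm (f x))\<^sup>2 \<le> (Q * exp (R * \<bar>x\<bar> - x\<^sup>2 / g))\<^sup>2"
      by (rule power_mono[OF bnd n0])
    also have "\<dots> = Q\<^sup>2 * exp ((2 * R) * \<bar>x\<bar> - x\<^sup>2 / (g / 2))"
    proof -
      have "(exp (R * \<bar>x\<bar> - x\<^sup>2 / g))\<^sup>2 = exp (2 * (R * \<bar>x\<bar> - x\<^sup>2 / g))"
        by (simp add: power2_eq_square exp_add[symmetric])
      also have "2 * (R * \<bar>x\<bar> - x\<^sup>2 / g) = (2 * R) * \<bar>x\<bar> - x\<^sup>2 / (g / 2)"
        using g by (simp add: field_simps)
      finally show ?thesis by (simp add: power_mult_distrib)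
    qed
    finally have fb: "(norm (f x))\<^sup>2 \<le> Q\<^sup>2 * exp ((2 * R) * \<bar>x\<bar> - x\<^sup>2 / (g / 2))" .
    have "norm (f x * \<phi> x) = norm (f x) * norm (\<phi> x)" by (simp add: norm_mult)
    also have "\<dots> \<le> ((norm (f x))\<^sup>2 + (norm (\<phi> x))\<^sup>2) / 2"
      using sum_squares_ge_zero[of "norm (f x) - norm (\<phi> x)" 0] by (simp add: power2_eq_square algebra_simps)
    also have "\<dots> \<le> (Q\<^sup>2 * exp ((2 * R) * \<bar>x\<bar> - x\<^sup>2 / (g / 2)) + (cmod (\<phi> x))\<^sup>2) / 2"
      using fb by simp
    also have "\<dots> = norm ((Q\<^sup>2 * exp ((2 * R) * \<bar>x\<bar> - x\<^sup>2 / (g / 2)) + (cmod (\<phi> x))\<^sup>2) / 2)"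
      by simp
    finally show "norm (f x * \<phi> x) \<le> norm ((Q\<^sup>2 * exp ((2 * R) * \<bar>x\<bar> - x\<^sup>2 / (g / 2)) + (cmod (\<phi> x))\<^sup>2) / 2)" .
  qed
qed


definition kz :: "real \<Rightarrow> complex \<Rightarrow> real \<Rightarrow> complex" where
  "kz \<gamma> z x = kern \<gamma> z x * (- (2 * complex_of_real (sqrt 2) * (complex_of_real (sqrt 2) * z - complex_of_real x)) / complex_of_real (\<gamma>\<^sup>2))"

lemma kern_meas: "kern \<gamma> z \<in> borel_measurable lborel"
  unfolding kern_def by measurable

lemma kz_meas: "kz \<gamma> z \<in> borel_measurable lborel"
  unfolding kz_def kern_def by measurable

lemma sqrt2_sq_c: "complex_of_real (sqrt 2) * complex_of_real (sqrt 2) = 2"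
  by (simp only: of_real_mult[symmetric] real_sqrt_mult_self) simp

lemma kern_norm:
  assumes "\<gamma> > 0"
  shows "norm (kern \<gamma> z x) = (2 / \<gamma>\<^sup>2 / pi) powr (1/4) * exp ((2 * (Im z)\<^sup>2 - (sqrt 2 * Re z - x)\<^sup>2) / \<gamma>\<^sup>2)"
proof -
  have "Re (- (complex_of_real (sqrt 2) * z - complex_of_real x)\<^sup>2 / complex_of_real (\<gamma>\<^sup>2))
      = (2 * (Im z)\<^sup>2 - (sqrt 2 * Re z - x)\<^sup>2) / \<gamma>\<^sup>2"
    by (simp add: power2_eq_square algebra_simps diff_divide_distrib add_divide_distrib)
  then show ?thesis
    unfolding kern_def norm_mult norm_exp_eq_Re by simp
qed

lemma kern_bound:
  assumes "\<gamma> > 0"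
  shows "norm (kern \<gamma> z x) \<le> ((2 / \<gamma>\<^sup>2 / pi) powr (1/4) * exp (2 * (Im z)\<^sup>2 / \<gamma>\<^sup>2))
            * exp ((2 * sqrt 2 * \<bar>Re z\<bar> / \<gamma>\<^sup>2) * \<bar>x\<bar> - x\<^sup>2 / \<gamma>\<^sup>2)"
proof -
  have "- (sqrt 2 * Re z - x)\<^sup>2 \<le> 2 * sqrt 2 * \<bar>Re z\<bar> * \<bar>x\<bar> - x\<^sup>2"
  proof -
    have h0: "Re z * x \<le> \<bar>Re z\<bar> * \<bar>x\<bar>"
      by (metis abs_ge_self abs_mult)
    have h1: "2 * sqrt 2 * (Re z * x) \<le> 2 * sqrt 2 * (\<bar>Re z\<bar> * \<bar>x\<bar>)"
      by (rule mult_left_mono[OF h0]) simp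
    have h2: "0 \<le> (sqrt 2 * Re z)\<^sup>2" by simp
    have h3: "- (sqrt 2 * Re z - x)\<^sup>2 = - (sqrt 2 * Re z)\<^sup>2 + 2 * sqrt 2 * (Re z * x) - x\<^sup>2"
      by (simp add: power2_eq_square algebra_simps)
    have h4: "2 * sqrt 2 * (\<bar>Re z\<bar> * \<bar>x\<bar>) = 2 * sqrt 2 * \<bar>Re z\<bar> * \<bar>x\<bar>" by (simp add: mult.assoc)
    show ?thesis using h1 h2 h3 h4 by linarith
  qed
  hence d: "(- (sqrt 2 * Re z - x)\<^sup>2) / \<gamma>\<^sup>2 \<le> (2 * sqrt 2 * \<bar>Re z\<bar> * \<bar>x\<bar> - x\<^sup>2) / \<gamma>\<^sup>2"
    by (rule divide_right_mono) simp
  have e1: "(2 * (Im z)\<^sup>2 - (sqrt 2 * Re z - x)\<^sup>2) / \<gamma>\<^sup>2 = 2 * (Im z)\<^sup>2 / \<gamma>\<^sup>2 + (- (sqrt 2 * Re z - x)\<^sup>2) / \<gamma>\<^sup>2"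
    by (simp add: diff_divide_distrib)
  have e2: "(2 * sqrt 2 * \<bar>Re z\<bar> / \<gamma>\<^sup>2) * \<bar>x\<bar> - x\<^sup>2 / \<gamma>\<^sup>2 = (2 * sqrt 2 * \<bar>Re z\<bar> * \<bar>x\<bar> - x\<^sup>2) / \<gamma>\<^sup>2"
    by (simp add: diff_divide_distrib)
  have "(2 * (Im z)\<^sup>2 - (sqrt 2 * Re z - x)\<^sup>2) / \<gamma>\<^sup>2 \<le> 2 * (Im z)\<^sup>2 / \<gamma>\<^sup>2 + ((2 * sqrt 2 * \<bar>Re z\<bar> / \<gamma>\<^sup>2) * \<bar>x\<bar> - x\<^sup>2 / \<gamma>\<^sup>2)"
    unfolding e1 e2 using d by linarith
  hence "exp ((2 * (Im z)\<^sup>2 - (sqrt 2 * Re z - x)\<^sup>2) / \<gamma>\<^sup>2) \<le> exp (2 * (Im z)\<^sup>2 / \<gamma>\<^sup>2) * exp ((2 * sqrt 2 * \<bar>Re z\<bar> / \<gamma>\<^sup>2) * \<bar>x\<bar> - x\<^sup>2 / \<gamma>\<^sup>2)"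
    by (simp add: exp_add[symmetric])
  then show ?thesis
    unfolding kern_norm[OF assms] by (simp add: mult.assoc mult_left_mono)
qed

lemma poly_exp_bound:
  fixes A B Q R g x :: real
  assumes "A \<ge> 0" "B \<ge> 0" "Q \<ge> 0" "y \<le> (A + B * \<bar>x\<bar>) * (Q * exp (R * \<bar>x\<bar> - x\<^sup>2 / g))"
  shows "y \<le> ((A + B) * Q) * exp ((R + 1) * \<bar>x\<bar> - x\<^sup>2 / g)"
proof -
  have e1: "1 \<le> exp \<bar>x\<bar>" and e2: "\<bar>x\<bar> \<le> exp \<bar>x\<bar>"
    using exp_ge_add_one_self[of "\<bar>x\<bar>"] by linarith+
  have "A + B * \<bar>x\<bar> \<le> (A + B) * exp \<bar>x\<bar>"
    using mult_left_mono[OF e1 assms(1)] mult_left_mono[OF e2 assms(2)] by (simp add: algebra_simps)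
  hence "(A + B * \<bar>x\<bar>) * (Q * exp (R * \<bar>x\<bar> - x\<^sup>2 / g)) \<le> ((A + B) * exp \<bar>x\<bar>) * (Q * exp (R * \<bar>x\<bar> - x\<^sup>2 / g))"
    by (rule mult_right_mono) (use assms(3) in simp)
  also have "\<dots> = ((A + B) * Q) * exp ((R + 1) * \<bar>x\<bar> - x\<^sup>2 / g)"
    by (simp add: exp_add[symmetric] algebra_simps)
  finally show ?thesis using assms(4) by linarith
qed


lemma kern_int:
  assumes g: "\<gamma> > 0" and phi: "\<phi> \<in> L2"
  shows "integrable lborel (\<lambda>x. kern \<gamma> z x * \<phi> x)"
  by (rule int_phi[OF _ phi kern_meas kern_bound[OF g]]) (use g in simp)

lemma kern_gen_int:
  assumes g: "\<gamma> > 0" and phi: "\<phi> \<in> L2" and fm: "f \<in> borel_measurable lborel"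
    and A: "A \<ge> 0" and B: "B \<ge> 0"
    and fb: "\<And>x. norm (f x) \<le> (A + B * \<bar>x\<bar>) * norm (kern \<gamma> z x)"
  shows "integrable lborel (\<lambda>x. f x * \<phi> x)"
proof (rule int_phi[OF _ phi fm])
  show "\<gamma>\<^sup>2 > 0" using g by simp
  fix x
  have Q: "0 \<le> (2 / \<gamma>\<^sup>2 / pi) powr (1/4) * exp (2 * (Im z)\<^sup>2 / \<gamma>\<^sup>2)" by simp
  have "norm (f x) \<le> (A + B * \<bar>x\<bar>) * (((2 / \<gamma>\<^sup>2 / pi) powr (1/4) * exp (2 * (Im z)\<^sup>2 / \<gamma>\<^sup>2))
            * exp ((2 * sqrt 2 * \<bar>Re z\<bar> / \<gamma>\<^sup>2) * \<bar>x\<bar> - x\<^sup>2 / \<gamma>\<^sup>2))"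
    using fb[of x] mult_left_mono[OF kern_bound[OF g, of z x], of "A + B * \<bar>x\<bar>"] A B
    by (smt (verit) abs_ge_zero mult_nonneg_nonneg)
  from poly_exp_bound[OF A B Q this]
  show "norm (f x) \<le> ((A + B) * ((2 / \<gamma>\<^sup>2 / pi) powr (1/4) * exp (2 * (Im z)\<^sup>2 / \<gamma>\<^sup>2)))
     * exp ((2 * sqrt 2 * \<bar>Re z\<bar> / \<gamma>\<^sup>2 + 1) * \<bar>x\<bar> - x\<^sup>2 / \<gamma>\<^sup>2)" .
qed

lemma xkern_int:
  assumes g: "\<gamma> > 0" and phi: "\<phi> \<in> L2"
  shows "integrable lborel (\<lambda>x. (complex_of_real x * kern \<gamma> z x) * \<phi> x)"
proof (rule kern_gen_int[OF g phi _ order.refl zero_le_one])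
  show "(\<lambda>x. complex_of_real x * kern \<gamma> z x) \<in> borel_measurable lborel"
    using kern_meas[of \<gamma> z] by measurable
  show "norm (complex_of_real x * kern \<gamma> z x) \<le> (0 + 1 * \<bar>x\<bar>) * norm (kern \<gamma> z x)" for x
    by (simp add: norm_mult)
qed

lemma kz_int:
  assumes g: "\<gamma> > 0" and phi: "\<phi> \<in> L2"
  shows "integrable lborel (\<lambda>x. kz \<gamma> z x * \<phi> x)"
proof (rule kern_gen_int[OF g phi kz_meas])
  show "0 \<le> 4 * norm z / \<gamma>\<^sup>2" "0 \<le> 2 * sqrt 2 / \<gamma>\<^sup>2" by simp_all
  fix x
  have n: "norm (complex_of_real (sqrt 2) * z - complex_of_real x) \<le> sqrt 2 * norm z + \<bar>x\<bar>"
    by (rule order.trans[OF norm_triangle_ineq4]) (simp add: norm_mult)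
  have "norm (kz \<gamma> z x) = norm (kern \<gamma> z x) * (2 * sqrt 2 * norm (complex_of_real (sqrt 2) * z - complex_of_real x) / \<gamma>\<^sup>2)"
    unfolding kz_def by (simp add: norm_mult norm_divide norm_power)
  also have "\<dots> \<le> norm (kern \<gamma> z x) * (2 * sqrt 2 * (sqrt 2 * norm z + \<bar>x\<bar>) / \<gamma>\<^sup>2)"
    by (intro mult_left_mono divide_right_mono n) simp_all
  also have "2 * sqrt 2 * (sqrt 2 * norm z + \<bar>x\<bar>) / \<gamma>\<^sup>2 = 4 * norm z / \<gamma>\<^sup>2 + 2 * sqrt 2 / \<gamma>\<^sup>2 * \<bar>x\<bar>"
    by (simp add: field_simps add_divide_distrib)
  finally show "norm (kz \<gamma> z x) \<le> (4 * norm z / \<gamma>\<^sup>2 + 2 * sqrt 2 / \<gamma>\<^sup>2 * \<bar>x\<bar>) * norm (kern \<gamma> z x)"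
    by (simp add: mult.commute)
qed


lemma exp_rem_bound:
  fixes u :: complex
  shows "norm (exp u - 1 - u) \<le> exp (norm u) * (norm u)\<^sup>2"
  using Taylor_exp_field[of u 1] by (simp add: algebra_simps power2_eq_square)

lemma kern_rem:
  assumes g: "\<gamma> > 0" and h: "norm h \<le> 1"
  shows "norm (kern \<gamma> (z0 + h) x - kern \<gamma> z0 x - h * kz \<gamma> z0 x)
    \<le> (norm h)\<^sup>2 * (norm (kern \<gamma> z0 x) *
        (exp ((2 + 2 * sqrt 2 * (sqrt 2 * norm z0 + \<bar>x\<bar>)) / \<gamma>\<^sup>2) * ((2 + 2 * sqrt 2 * (sqrt 2 * norm z0 + \<bar>x\<bar>)) / \<gamma>\<^sup>2)\<^sup>2 + 2 / \<gamma>\<^sup>2))"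
proof -
  define c where "c = complex_of_real (sqrt 2)"
  define G where "G = complex_of_real (\<gamma>\<^sup>2)"
  define s0 where "s0 = c * z0 - complex_of_real x"
  define u where "u = - (2 * h\<^sup>2 + 2 * c * h * s0) / G"
  define Ax where "Ax = (2 + 2 * sqrt 2 * (sqrt 2 * norm z0 + \<bar>x\<bar>)) / \<gamma>\<^sup>2"
  have cc: "c * c = 2" unfolding c_def by (rule sqrt2_sq_c)
  have G0: "G \<noteq> 0" using g by (simp add: G_def)
  have nG: "norm G = \<gamma>\<^sup>2" by (simp add: G_def norm_power)
  have k1: "kern \<gamma> (z0 + h) x = kern \<gamma> z0 x * exp u"
  proof -
    have "(c * (z0 + h) - complex_of_real x)\<^sup>2 = s0\<^sup>2 + ((c * c) * h\<^sup>2 + 2 * c * h * s0)"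
      unfolding s0_def by (simp add: power2_eq_square algebra_simps)
    hence "(c * (z0 + h) - complex_of_real x)\<^sup>2 = s0\<^sup>2 + (2 * h\<^sup>2 + 2 * c * h * s0)"
      unfolding cc .
    hence "- (c * (z0 + h) - complex_of_real x)\<^sup>2 / G = - s0\<^sup>2 / G + u"
      unfolding u_def by (simp add: diff_divide_distrib add_divide_distrib)
    hence e: "exp (- (c * (z0 + h) - complex_of_real x)\<^sup>2 / G) = exp (- s0\<^sup>2 / G) * exp u"
      by (simp only: exp_add)
    show ?thesis
      unfolding kern_def c_def[symmetric] G_def[symmetric] s0_def[symmetric] e by (simp add: mult.assoc)
  qed
  have k2: "kz \<gamma> z0 x = kern \<gamma> z0 x * (- (2 * c * s0) / G)"
    unfolding kz_def c_def G_def s0_def by simp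
  have diff: "kern \<gamma> (z0 + h) x - kern \<gamma> z0 x - h * kz \<gamma> z0 x = kern \<gamma> z0 x * ((exp u - 1 - u) - 2 * h\<^sup>2 / G)"
  proof -
    have "- u - 2 * h\<^sup>2 / G = - (h * (- (2 * c * s0) / G))"
      unfolding u_def using G0 by (simp add: field_simps)
    note eq = this
    have "kern \<gamma> z0 x * exp u - kern \<gamma> z0 x - h * (kern \<gamma> z0 x * (- (2 * c * s0) / G))
        = kern \<gamma> z0 x * ((exp u - 1) + (- (h * (- (2 * c * s0) / G))))"
      by (simp add: algebra_simps)
    also have "\<dots> = kern \<gamma> z0 x * ((exp u - 1) + (- u - 2 * h\<^sup>2 / G))"
      unfolding eq ..
    also have "\<dots> = kern \<gamma> z0 x * ((exp u - 1 - u) - 2 * h\<^sup>2 / G)"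
      by (simp add: algebra_simps)
    finally show ?thesis unfolding k1 k2 .
  qed
  have Ax0: "Ax \<ge> 0" unfolding Ax_def by simp
  have ns0: "norm s0 \<le> sqrt 2 * norm z0 + \<bar>x\<bar>"
    unfolding s0_def c_def by (rule order.trans[OF norm_triangle_ineq4]) (simp add: norm_mult)
  have nh0: "0 \<le> norm h" by simp
  have nu: "norm u \<le> norm h * Ax"
  proof -
    have "norm (2 * h\<^sup>2 + 2 * c * h * s0) \<le> 2 * (norm h)\<^sup>2 + 2 * sqrt 2 * norm h * norm s0"
      by (rule order.trans[OF norm_triangle_ineq]) (simp add: norm_mult norm_power c_def)
    also have "\<dots> \<le> 2 * norm h + 2 * sqrt 2 * norm h * (sqrt 2 * norm z0 + \<bar>x\<bar>)"
    proof -
      have "(norm h)\<^sup>2 \<le> norm h" using h nh0 by (simp add: power2_eq_square mult_left_le_one_le)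
      moreover have "2 * sqrt 2 * norm h * norm s0 \<le> 2 * sqrt 2 * norm h * (sqrt 2 * norm z0 + \<bar>x\<bar>)"
        by (rule mult_left_mono[OF ns0]) simp
      ultimately show ?thesis by linarith
    qed
    also have "\<dots> = norm h * Ax * \<gamma>\<^sup>2"
      unfolding Ax_def using g by (simp add: field_simps)
    finally have "norm (2 * h\<^sup>2 + 2 * c * h * s0) \<le> norm h * Ax * \<gamma>\<^sup>2" .
    then show ?thesis
      unfolding u_def norm_divide norm_minus_cancel nG using g by (simp add: divide_le_eq)
  qed
  have nuA: "norm u \<le> Ax"
    using nu mult_right_mono[OF h Ax0] by simp
  have b1: "norm (exp u - 1 - u) \<le> (norm h)\<^sup>2 * (exp Ax * Ax\<^sup>2)"
  proof -
    have "norm (exp u - 1 - u) \<le> exp (norm u) * (norm u)\<^sup>2" by (rule exp_rem_bound)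
    also have "\<dots> \<le> exp Ax * (norm h * Ax)\<^sup>2"
      by (intro mult_mono power_mono nu) (simp_all add: nuA)
    finally show ?thesis by (simp add: power_mult_distrib mult.left_commute)
  qed
  have b2: "norm (2 * h\<^sup>2 / G) = (norm h)\<^sup>2 * (2 / \<gamma>\<^sup>2)"
    by (simp add: norm_divide norm_mult norm_power nG)
  have "norm ((exp u - 1 - u) - 2 * h\<^sup>2 / G) \<le> (norm h)\<^sup>2 * (exp Ax * Ax\<^sup>2 + 2 / \<gamma>\<^sup>2)"
    using norm_triangle_ineq4[of "exp u - 1 - u" "2 * h\<^sup>2 / G"] b1 b2 by (simp add: algebra_simps)
  then have "norm (kern \<gamma> z0 x) * norm ((exp u - 1 - u) - 2 * h\<^sup>2 / G) \<le> norm (kern \<gamma> z0 x) * ((norm h)\<^sup>2 * (exp Ax * Ax\<^sup>2 + 2 / \<gamma>\<^sup>2))"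
    by (rule mult_left_mono) simp
  then show ?thesis
    unfolding diff norm_mult Ax_def[symmetric] by (simp add: algebra_simps)
qed


lemma kern_exp_int:
  assumes g: "\<gamma> > 0" and phi: "\<phi> \<in> L2" and fm: "f \<in> borel_measurable lborel"
    and Q1: "Q1 \<ge> 0"
    and fb: "\<And>x. norm (f x) \<le> (Q1 * exp (R1 * \<bar>x\<bar>)) * norm (kern \<gamma> z x)"
  shows "integrable lborel (\<lambda>x. f x * \<phi> x)"
proof (rule int_phi[OF _ phi fm])
  show "\<gamma>\<^sup>2 > 0" using g by simp
  fix x
  have "norm (f x) \<le> (Q1 * exp (R1 * \<bar>x\<bar>)) * (((2 / \<gamma>\<^sup>2 / pi) powr (1/4) * exp (2 * (Im z)\<^sup>2 / \<gamma>\<^sup>2))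
            * exp ((2 * sqrt 2 * \<bar>Re z\<bar> / \<gamma>\<^sup>2) * \<bar>x\<bar> - x\<^sup>2 / \<gamma>\<^sup>2))"
    by (rule order.trans[OF fb mult_left_mono[OF kern_bound[OF g]]]) (use Q1 in simp)
  also have "\<dots> = (Q1 * ((2 / \<gamma>\<^sup>2 / pi) powr (1/4) * exp (2 * (Im z)\<^sup>2 / \<gamma>\<^sup>2)))
     * exp ((R1 + 2 * sqrt 2 * \<bar>Re z\<bar> / \<gamma>\<^sup>2) * \<bar>x\<bar> - x\<^sup>2 / \<gamma>\<^sup>2)"
    by (simp add: exp_add[symmetric] algebra_simps)
  finally show "norm (f x) \<le> (Q1 * ((2 / \<gamma>\<^sup>2 / pi) powr (1/4) * exp (2 * (Im z)\<^sup>2 / \<gamma>\<^sup>2)))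
     * exp ((R1 + 2 * sqrt 2 * \<bar>Re z\<bar> / \<gamma>\<^sup>2) * \<bar>x\<bar> - x\<^sup>2 / \<gamma>\<^sup>2)" .
qed

definition Mf :: "real \<Rightarrow> complex \<Rightarrow> real \<Rightarrow> real" where
  "Mf \<gamma> z0 x = norm (kern \<gamma> z0 x) *
        (exp ((2 + 2 * sqrt 2 * (sqrt 2 * norm z0 + \<bar>x\<bar>)) / \<gamma>\<^sup>2) * ((2 + 2 * sqrt 2 * (sqrt 2 * norm z0 + \<bar>x\<bar>)) / \<gamma>\<^sup>2)\<^sup>2 + 2 / \<gamma>\<^sup>2)"

lemma Mf_nonneg: "Mf \<gamma> z0 x \<ge> 0"
  unfolding Mf_def by (intro mult_nonneg_nonneg add_nonneg_nonneg) simp_all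

lemma Mf_int:
  assumes g: "\<gamma> > 0" and phi: "\<phi> \<in> L2"
  shows "integrable lborel (\<lambda>x. Mf \<gamma> z0 x * norm (\<phi> x))"
proof -
  define a0 where "a0 = (2 + 2 * sqrt 2 * (sqrt 2 * norm z0)) / \<gamma>\<^sup>2"
  define a1 where "a1 = 2 * sqrt 2 / \<gamma>\<^sup>2"
  have "integrable lborel (\<lambda>x. complex_of_real (Mf \<gamma> z0 x) * \<phi> x)"
  proof (rule kern_exp_int[OF g phi, of _ "2 * exp (2 * a0) + 2 / \<gamma>\<^sup>2" "2 * a1" z0])
    show "(\<lambda>x. complex_of_real (Mf \<gamma> z0 x)) \<in> borel_measurable lborel"
      unfolding Mf_def using kern_meas[of \<gamma> z0] by measurable
    show "0 \<le> 2 * exp (2 * a0) + 2 / \<gamma>\<^sup>2" by simp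
    fix x
    define A where "A = (2 + 2 * sqrt 2 * (sqrt 2 * norm z0 + \<bar>x\<bar>)) / \<gamma>\<^sup>2"
    have A0: "A \<ge> 0" unfolding A_def by simp
    have Aeq: "A = a0 + a1 * \<bar>x\<bar>" unfolding A_def a0_def a1_def by (simp add: field_simps add_divide_distrib)
    have "A\<^sup>2 \<le> 2 * exp A" using exp_lower_Taylor_quadratic[OF A0] A0 by linarith
    hence "exp A * A\<^sup>2 \<le> exp A * (2 * exp A)" by (rule mult_left_mono) simp
    also have "\<dots> = 2 * exp (2 * a0) * exp (2 * a1 * \<bar>x\<bar>)"
      unfolding Aeq by (simp add: exp_add[symmetric] algebra_simps)
    finally have t1: "exp A * A\<^sup>2 \<le> 2 * exp (2 * a0) * exp (2 * a1 * \<bar>x\<bar>)" .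
    have "1 \<le> exp (2 * a1 * \<bar>x\<bar>)" unfolding a1_def by simp
    hence t2: "2 / \<gamma>\<^sup>2 \<le> 2 / \<gamma>\<^sup>2 * exp (2 * a1 * \<bar>x\<bar>)"
      using mult_left_mono[of 1 "exp (2 * a1 * \<bar>x\<bar>)" "2 / \<gamma>\<^sup>2"] by simp
    have "exp A * A\<^sup>2 + 2 / \<gamma>\<^sup>2 \<le> (2 * exp (2 * a0) + 2 / \<gamma>\<^sup>2) * exp (2 * a1 * \<bar>x\<bar>)"
      using t1 t2 by (simp add: algebra_simps)
    hence le: "norm (kern \<gamma> z0 x) * (exp A * A\<^sup>2 + 2 / \<gamma>\<^sup>2) \<le> norm (kern \<gamma> z0 x) * ((2 * exp (2 * a0) + 2 / \<gamma>\<^sup>2) * exp (2 * a1 * \<bar>x\<bar>))"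
      by (rule mult_left_mono) simp
    then show "norm (complex_of_real (Mf \<gamma> z0 x)) \<le> (2 * exp (2 * a0) + 2 / \<gamma>\<^sup>2) * exp (2 * a1 * \<bar>x\<bar>) * norm (kern \<gamma> z0 x)"
    proof -
      have "norm (complex_of_real (Mf \<gamma> z0 x)) = Mf \<gamma> z0 x"
        by (simp only: norm_of_real abs_of_nonneg[OF Mf_nonneg])
      also have "Mf \<gamma> z0 x = norm (kern \<gamma> z0 x) * (exp A * A\<^sup>2 + 2 / \<gamma>\<^sup>2)"
        unfolding Mf_def A_def ..
      finally show ?thesis using le
        by (simp add: mult.commute)
    qed
  qed
  from integrable_norm[OF this] show ?thesis
    using Mf_nonneg[of \<gamma> z0] by (simp add: norm_mult)
qed


lemma F_deriv:
  assumes g: "\<gamma> > 0" and phi: "\<phi> \<in> L2"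
  shows "((\<lambda>z. \<integral>x. kern \<gamma> z x * \<phi> x \<partial>lborel) has_field_derivative (\<integral>x. kz \<gamma> z0 x * \<phi> x \<partial>lborel)) (at z0)"
proof -
  define F where "F = (\<lambda>z. \<integral>x. kern \<gamma> z x * \<phi> x \<partial>lborel)"
  define D where "D = (\<integral>x. kz \<gamma> z0 x * \<phi> x \<partial>lborel)"
  define I where "I = (\<integral>x. Mf \<gamma> z0 x * norm (\<phi> x) \<partial>lborel)"
  have key: "norm ((F w - F z0) / (w - z0) - D) \<le> norm (w - z0) * I"
    if w0: "w \<noteq> z0" and w1: "norm (w - z0) \<le> 1" for w
  proof -
    define h where "h = w - z0"
    have wh: "w = z0 + h" unfolding h_def by simp
    have h0: "h \<noteq> 0" using w0 unfolding h_def by simp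
    have i1: "integrable lborel (\<lambda>x. kern \<gamma> w x * \<phi> x)" by (rule kern_int[OF g phi])
    have i2: "integrable lborel (\<lambda>x. kern \<gamma> z0 x * \<phi> x)" by (rule kern_int[OF g phi])
    have i3: "integrable lborel (\<lambda>x. h * (kz \<gamma> z0 x * \<phi> x))"
      by (rule integrable_mult_right[OF kz_int[OF g phi]])
    have i4: "integrable lborel (\<lambda>x. (norm h)\<^sup>2 * (Mf \<gamma> z0 x * norm (\<phi> x)))"
      by (rule integrable_mult_right[OF Mf_int[OF g phi]])
    have "F w - F z0 - h * D = (\<integral>x. (kern \<gamma> w x * \<phi> x - kern \<gamma> z0 x * \<phi> x - h * (kz \<gamma> z0 x * \<phi> x)) \<partial>lborel)"
      unfolding F_def D_def
      by (simp add: Bochner_Integration.integral_diff[OF Bochner_Integration.integrable_diff[OF i1 i2] i3]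
                    Bochner_Integration.integral_diff[OF i1 i2] integral_mult_right_zero)
    also have "norm \<dots> \<le> (\<integral>x. norm (kern \<gamma> w x * \<phi> x - kern \<gamma> z0 x * \<phi> x - h * (kz \<gamma> z0 x * \<phi> x)) \<partial>lborel)"
      by (rule integral_norm_bound)
    also have "\<dots> \<le> (\<integral>x. (norm h)\<^sup>2 * (Mf \<gamma> z0 x * norm (\<phi> x)) \<partial>lborel)"
    proof (rule integral_mono)
      show "integrable lborel (\<lambda>x. norm (kern \<gamma> w x * \<phi> x - kern \<gamma> z0 x * \<phi> x - h * (kz \<gamma> z0 x * \<phi> x)))"
        by (intro integrable_norm Bochner_Integration.integrable_diff i1 i2 i3)
      show "integrable lborel (\<lambda>x. (norm h)\<^sup>2 * (Mf \<gamma> z0 x * norm (\<phi> x)))" by (rule i4)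
      fix x
      have "kern \<gamma> w x * \<phi> x - kern \<gamma> z0 x * \<phi> x - h * (kz \<gamma> z0 x * \<phi> x)
          = (kern \<gamma> (z0 + h) x - kern \<gamma> z0 x - h * kz \<gamma> z0 x) * \<phi> x"
        unfolding wh by (simp add: algebra_simps)
      hence "norm (kern \<gamma> w x * \<phi> x - kern \<gamma> z0 x * \<phi> x - h * (kz \<gamma> z0 x * \<phi> x))
          = norm (kern \<gamma> (z0 + h) x - kern \<gamma> z0 x - h * kz \<gamma> z0 x) * norm (\<phi> x)"
        by (simp add: norm_mult)
      also have "\<dots> \<le> ((norm h)\<^sup>2 * Mf \<gamma> z0 x) * norm (\<phi> x)"
        by (rule mult_right_mono) (use kern_rem[OF g, of h z0 x] w1 in \<open>simp_all add: h_def Mf_def\<close>)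
      finally show "norm (kern \<gamma> w x * \<phi> x - kern \<gamma> z0 x * \<phi> x - h * (kz \<gamma> z0 x * \<phi> x))
          \<le> (norm h)\<^sup>2 * (Mf \<gamma> z0 x * norm (\<phi> x))" by (simp add: mult.assoc)
    qed
    also have "\<dots> = (norm h)\<^sup>2 * I" unfolding I_def by simp
    finally have b: "norm (F w - F z0 - h * D) \<le> (norm h)\<^sup>2 * I" .
    have "(F w - F z0) / (w - z0) - D = (F w - F z0 - h * D) / h"
      using h0 unfolding h_def by (simp add: field_simps)
    hence "norm ((F w - F z0) / (w - z0) - D) = norm (F w - F z0 - h * D) / norm h"
      by (simp add: norm_divide)
    also have "\<dots> \<le> (norm h)\<^sup>2 * I / norm h"
      by (rule divide_right_mono[OF b]) simp
    also have "\<dots> = norm h * I" using h0 by (simp add: power2_eq_square)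
    finally show ?thesis unfolding h_def .
  qed
  have ev: "eventually (\<lambda>w. norm ((F w - F z0) / (w - z0) - D) \<le> norm (w - z0) * I) (at z0)"
    unfolding eventually_at
    by (rule exI[of _ 1]) (auto intro!: key simp: dist_norm)
  have lim0: "((\<lambda>w. norm (w - z0) * I) \<longlongrightarrow> 0) (at z0)"
  proof -
    have "((\<lambda>w. norm (w - z0) * I) \<longlongrightarrow> norm (z0 - z0) * I) (at z0)"
      by (intro tendsto_intros)
    then show ?thesis by simp
  qed
  have "((\<lambda>w. (F w - F z0) / (w - z0) - D) \<longlongrightarrow> 0) (at z0)"
    by (rule Lim_null_comparison[OF ev lim0])
  hence "((\<lambda>w. (F w - F z0) / (w - z0)) \<longlongrightarrow> D) (at z0)"
    by (rule LIM_zero_cancel)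
  then show ?thesis
    unfolding F_def[symmetric] D_def[symmetric] has_field_derivative_iff .
qed


lemma pointwise:
  assumes g: "\<gamma> > 0"
  shows "complex_of_real (\<gamma>\<^sup>2 / (2 * sqrt 2)) * kz \<gamma> z x + complex_of_real (sqrt 2) * z * kern \<gamma> z x
       = complex_of_real x * kern \<gamma> z x"
proof -
  define c where "c = complex_of_real (sqrt 2)"
  define G where "G = complex_of_real (\<gamma>\<^sup>2)"
  have c0: "c \<noteq> 0" unfolding c_def by simp
  have G0: "G \<noteq> 0" unfolding G_def using g by simp
  have e: "complex_of_real (\<gamma>\<^sup>2 / (2 * sqrt 2)) = G / (2 * c)" unfolding G_def c_def by simp
  have "G / (2 * c) * (- (2 * c * (c * z - complex_of_real x)) / G) = - (c * z - complex_of_real x)"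
    using c0 G0 by (simp add: field_simps)
  note f = this
  have "G / (2 * c) * (kern \<gamma> z x * (- (2 * c * (c * z - complex_of_real x)) / G)) + c * z * kern \<gamma> z x
      = kern \<gamma> z x * (G / (2 * c) * (- (2 * c * (c * z - complex_of_real x)) / G)) + c * z * kern \<gamma> z x"
    by (simp only: mult.left_commute)
  also have "\<dots> = kern \<gamma> z x * (- (c * z - complex_of_real x)) + c * z * kern \<gamma> z x"
    unfolding f ..
  also have "\<dots> = complex_of_real x * kern \<gamma> z x"
    by (simp add: algebra_simps)
  finally show ?thesis
    unfolding kz_def e c_def[symmetric] G_def[symmetric] .
qed

theorem mainTheorem14:
  fixes \<gamma> :: real and \<phi> :: "real \<Rightarrow> complex"
  assumes "\<gamma> > 0" and "\<phi> \<in> dom_X"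
  shows "\<forall>z. complex_of_real (\<gamma>\<^sup>2 / (2 * sqrt 2)) * deriv (rbf_SB \<gamma> \<phi>) z
              + complex_of_real (sqrt 2) * z * rbf_SB \<gamma> \<phi> z
            = rbf_SB \<gamma> (pos_op \<phi>) z"
proof
  fix z
  have g: "\<gamma> > 0" by fact
  have phi: "\<phi> \<in> L2" using assms(2) by (simp add: dom_X_def)
  have SB: "rbf_SB \<gamma> \<psi> = (\<lambda>z. \<integral>x. kern \<gamma> z x * \<psi> x \<partial>lborel)" for \<psi>
    unfolding rbf_SB_def[abs_def] kernel_eq[OF g] ..
  have d: "deriv (rbf_SB \<gamma> \<phi>) z = (\<integral>x. kz \<gamma> z x * \<phi> x \<partial>lborel)"
    unfolding SB by (rule DERIV_imp_deriv[OF F_deriv[OF g phi]])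
  have i1: "integrable lborel (\<lambda>x. complex_of_real (\<gamma>\<^sup>2 / (2 * sqrt 2)) * (kz \<gamma> z x * \<phi> x))"
    by (rule integrable_mult_right[OF kz_int[OF g phi]])
  have i2: "integrable lborel (\<lambda>x. complex_of_real (sqrt 2) * z * (kern \<gamma> z x * \<phi> x))"
    by (rule integrable_mult_right[OF kern_int[OF g phi]])
  have "complex_of_real (\<gamma>\<^sup>2 / (2 * sqrt 2)) * deriv (rbf_SB \<gamma> \<phi>) z
              + complex_of_real (sqrt 2) * z * rbf_SB \<gamma> \<phi> z
      = (\<integral>x. complex_of_real (\<gamma>\<^sup>2 / (2 * sqrt 2)) * (kz \<gamma> z x * \<phi> x) + complex_of_real (sqrt 2) * z * (kern \<gamma> z x * \<phi> x) \<partial>lborel)"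
    unfolding d unfolding SB
    by (simp only: Bochner_Integration.integral_add[OF i1 i2] integral_mult_right_zero)
  also have "\<dots> = (\<integral>x. kern \<gamma> z x * pos_op \<phi> x \<partial>lborel)"
  proof (rule Bochner_Integration.integral_cong[OF refl])
    fix x
    have "complex_of_real (\<gamma>\<^sup>2 / (2 * sqrt 2)) * (kz \<gamma> z x * \<phi> x) + complex_of_real (sqrt 2) * z * (kern \<gamma> z x * \<phi> x)
        = (complex_of_real (\<gamma>\<^sup>2 / (2 * sqrt 2)) * kz \<gamma> z x + complex_of_real (sqrt 2) * z * kern \<gamma> z x) * \<phi> x"
      by (simp add: algebra_simps)
    also have "\<dots> = kern \<gamma> z x * pos_op \<phi> x"
      unfolding pointwise[OF g] pos_op_def by (simp add: algebra_simps)
    finally show "complex_of_real (\<gamma>\<^sup>2 / (2 * sqrt 2)) * (kz \<gamma> z x * \<phi> x) + complex_of_real (sqrt 2) * z * (kern \<gamma> z x * \<phi> x)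
        = kern \<gamma> z x * pos_op \<phi> x" .
  qed
  also have "\<dots> = rbf_SB \<gamma> (pos_op \<phi>) z" unfolding SB ..
  finally show "complex_of_real (\<gamma>\<^sup>2 / (2 * sqrt 2)) * deriv (rbf_SB \<gamma> \<phi>) z
              + complex_of_real (sqrt 2) * z * rbf_SB \<gamma> \<phi> z
            = rbf_SB \<gamma> (pos_op \<phi>) z" .
qed

end
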